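(* Let $0<\alpha\le1$ and let $v,w:[0,T]\to L^2(\Omega)$ be (sufficiently integrable) functions. Then for $t\in[0,T]$, \[ \mathcal{I}\bigl(\langle\mathcal{I}^{1-\alpha}(v+w),v+w\rangle\bigr)(t)\le(1+\alpha^{-1})\Bigl(\mathcal{I}\bigl(\langle\mathcal{I}^{1-\alpha}v,v\rangle\bigr)(t)+\mathcal{I}\bigl(\langle\mathcal{I}^{1-\alpha}w,w\rangle\bigr)(t)\Bigr). \]
   Context: $\langle\cdot,\cdot\rangle$ is the $L^2(\Omega)$ inner product. $\mathcal{I}g(t)=\int_0^tg(s)\,ds$; for $\beta>0$, $\omega_\beta(t)=t^{\beta-1}/\Gamma(\beta)$ and $\mathcal{I}^\beta v(t)=\int_0^t\omega_\beta(t-s)v(s)\,ds$. *)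

theory Defs
  imports "HOL-Analysis.Analysis"
begin

definition omega :: "real \<Rightarrow> real \<Rightarrow> real" where
  "omega \<beta> t = t powr (\<beta> - 1) / Gamma \<beta>"

definition Iint :: "(real \<Rightarrow> real) \<Rightarrow> real \<Rightarrow> real" where
  "Iint g t = set_lebesgue_integral lborel {0..t} g"

definition frac_int :: "real \<Rightarrow> (real \<Rightarrow> 'a::{banach, second_countable_topology}) \<Rightarrow> real \<Rightarrow> 'a" where
  "frac_int \<beta> v t =
     (if \<beta> = 0 then v t
      else set_lebesgue_integral lborel {0..t} (\<lambda>s. omega \<beta> (t - s) *\<^sub>R v s))"

end

theory Submission
  imports Defs
begin


lemma nn_powr_0c_fin:
  fixes a c :: real assumes "a > -1" "c \<ge> 0"
  shows "(\<integral>\<^sup>+x. ennreal (indicator {0..c} x * x powr a) \<partial>lborel) < \<infinity>"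
proof -
  have "integral\<^sup>N lborel (\<lambda>x. indicator {0..c} x * x powr a) = c powr (a+1) / (a+1)"
    by (rule nn_integral_has_integral_lebesgue) (auto intro: has_integral_powr_from_0 assms)
  then show ?thesis by simp
qed

lemma nn_powr_inf_fin:
  fixes a e :: real assumes "e < -1" "a > 0"
  shows "(\<integral>\<^sup>+x. ennreal (indicator {a..} x * x powr e) \<partial>lborel) < \<infinity>"
proof -
  have "integral\<^sup>N lborel (\<lambda>x. indicator {a..} x * x powr e) = -(a powr (e+1)) / (e+1)"
    by (rule nn_integral_has_integral_lebesgue[OF _ has_integral_powr_to_inf[OF assms]]) (use assms in auto)
  then show ?thesis by simp
qed



definition kk :: "real \<Rightarrow> real \<Rightarrow> real \<Rightarrow> real" where
  "kk g x r = (if r < x then (x - r) powr (g - 1) else 0)"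

definition JJ :: "real \<Rightarrow> ennreal" where
  "JJ g = (\<integral>\<^sup>+y. ennreal (indicator {0<..} y * (y powr (g-1) * (1+y) powr (g-1))) \<partial>lborel)"

lemma kk_nonneg: "kk g x r \<ge> 0" by (simp add: kk_def)

lemma kk_meas[measurable (raw)]:
  assumes [measurable]: "f \<in> borel_measurable M" "h \<in> borel_measurable M"
  shows "(\<lambda>z. kk g (f z) (h z)) \<in> borel_measurable M"
  unfolding kk_def by measurable

lemma JJ_fin:
  assumes "0 < g" "g < 1/2"
  shows "JJ g < \<infinity>"
proof -
  have "JJ g \<le> (\<integral>\<^sup>+y. ennreal (indicator {0..1} y * y powr (g-1)) + ennreal (indicator {1..} y * y powr (2*g-2)) \<partial>lborel)"
    unfolding JJ_def
  proof (rule nn_integral_mono)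
    fix y :: real
    show "ennreal (indicator {0<..} y * (y powr (g-1) * (1+y) powr (g-1)))
      \<le> ennreal (indicator {0..1} y * y powr (g-1)) + ennreal (indicator {1..} y * y powr (2*g-2))"
    proof (cases "y \<le> 0")
      case True then show ?thesis by simp
    next
      case False
      show ?thesis
      proof (cases "y \<le> 1")
        case True
        have "(1+y) powr (g-1) \<le> 1 powr (g-1)"
          using False assms by (intro powr_mono2') auto
        then have "y powr (g-1) * (1+y) powr (g-1) \<le> y powr (g-1)"
          by (simp add: mult_left_le)
        then have "ennreal (y powr (g-1) * (1+y) powr (g-1)) \<le> ennreal (y powr (g-1))" by (rule ennreal_leI)
        then show ?thesis using False True by (simp add: order_trans[OF _ add_increasing2[OF zero_le order_refl]])
      next
        case c2: False
        have "(1+y) powr (g-1) \<le> y powr (g-1)"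
          using False assms by (intro powr_mono2') auto
        then have "y powr (g-1) * (1+y) powr (g-1) \<le> y powr (g-1) * y powr (g-1)"
          by (simp add: mult_left_mono)
        also have "\<dots> = y powr (2*g-2)" using False by (simp add: powr_add[symmetric])
        finally have "ennreal (y powr (g-1) * (1+y) powr (g-1)) \<le> ennreal (y powr (2*g-2))" by (rule ennreal_leI)
        then show ?thesis using False c2 by (simp add: order_trans[OF _ add_increasing[OF zero_le order_refl]])
      qed
    qed
  qed
  also have "\<dots> = (\<integral>\<^sup>+y. ennreal (indicator {0..1} y * y powr (g-1)) \<partial>lborel) + (\<integral>\<^sup>+y. ennreal (indicator {1..} y * y powr (2*g-2)) \<partial>lborel)"
    by (rule nn_integral_add) auto
  also have "\<dots> < \<infinity>"
    using nn_powr_0c_fin[of "g-1" 1] nn_powr_inf_fin[of "2*g-2" 1] assms by simp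
  finally show ?thesis .
qed

lemma JJ_pos:
  assumes "0 < g" "g < 1"
  shows "JJ g > 0"
proof -
  have "(\<integral>\<^sup>+(y::real). ennreal (2 powr (g-1)) * indicator {0<..1} y \<partial>lborel) \<le> JJ g"
    unfolding JJ_def
  proof (intro nn_integral_mono)
    fix y :: real
    show "ennreal (2 powr (g-1)) * indicator {0<..1} y \<le> ennreal (indicator {0<..} y * (y powr (g-1) * (1+y) powr (g-1)))"
    proof (cases "0 < y \<and> y \<le> 1")
      case True
      have a: "1 \<le> y powr (g-1)" using powr_mono2'[of "g-1" y 1] True assms by simp
      have b: "2 powr (g-1) \<le> (1+y) powr (g-1)" using True assms
        by (intro powr_mono2') auto
      have "2 powr (g-1) \<le> y powr (g-1) * (1+y) powr (g-1)"
      proof -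
        have "(1+y) powr (g-1) = 1 * (1+y) powr (g-1)" by simp
        also have "\<dots> \<le> y powr (g-1) * (1+y) powr (g-1)"
          using a by (intro mult_right_mono) auto
        finally show ?thesis using b by linarith
      qed
      then show ?thesis using True by (simp add: ennreal_leI)
    qed auto
  qed
  moreover have "(\<integral>\<^sup>+(y::real). ennreal (2 powr (g-1)) * indicator {0<..1} y \<partial>lborel) = ennreal (2 powr (g-1))"
    by (subst nn_integral_cmult_indicator) auto
  moreover have "ennreal (2 powr (g-1)) > 0" by simp
  ultimately show ?thesis by (metis order_less_le_trans)
qed

lemma kernel_id:
  assumes "r < s" "0 < g"
  shows "(\<integral>\<^sup>+x. ennreal (kk g x r * kk g x s) \<partial>lborel) = ennreal ((s - r) powr (2*g-1)) * JJ g"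
proof -
  define d where "d = s - r"
  have d: "d > 0" using assms by (simp add: d_def)
  have "(\<integral>\<^sup>+x. ennreal (kk g x r * kk g x s) \<partial>lborel)
      = ennreal \<bar>d\<bar> * (\<integral>\<^sup>+y. ennreal (kk g (s + d * y) r * kk g (s + d * y) s) \<partial>lborel)"
    by (rule nn_integral_real_affine) (use d in \<open>auto simp: kk_def\<close>)
  also have "(\<lambda>y. ennreal (kk g (s + d * y) r * kk g (s + d * y) s))
      = (\<lambda>y. ennreal (d powr (2*g-2)) * ennreal (indicator {0<..} y * (y powr (g-1) * (1+y) powr (g-1))))"
  proof
    fix y
    show "ennreal (kk g (s + d * y) r * kk g (s + d * y) s) =
         ennreal (d powr (2*g-2)) * ennreal (indicator {0<..} y * (y powr (g-1) * (1+y) powr (g-1)))"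
    proof (cases "y > 0")
      case True
      have e1: "s + d * y - r = d * (1 + y)" by (simp add: d_def algebra_simps)
      have e3: "r < s + d * y" using mult_pos_pos[OF d True] assms(1) by linarith
      have "kk g (s + d * y) r * kk g (s + d * y) s = (d * (1+y)) powr (g-1) * (d*y) powr (g-1)"
        using True d assms e3 by (simp add: kk_def e1)
      also have "\<dots> = (d powr (g-1) * d powr (g-1)) * (y powr (g-1) * (1+y) powr (g-1))"
      proof -
        have p1: "(d*(1+y)) powr (g-1) = d powr (g-1) * (1+y) powr (g-1)"
          using True d by (simp add: powr_mult)
        have p2: "(d*y) powr (g-1) = d powr (g-1) * y powr (g-1)"
          using True d by (simp add: powr_mult)
        show ?thesis unfolding p1 p2 by (simp only: mult_ac)
      qed
      also have "d powr (g-1) * d powr (g-1) = d powr (2*g-2)"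
        by (simp add: powr_add[symmetric])
      finally show ?thesis using True by (simp add: ennreal_mult')
    next
      case False
      then have "d * y \<le> 0" using d by (simp add: mult_nonneg_nonpos)
      then show ?thesis using False by (simp add: kk_def)
    qed
  qed
  also have "(\<integral>\<^sup>+y. ennreal (d powr (2*g-2)) * ennreal (indicator {0<..} y * (y powr (g-1) * (1+y) powr (g-1))) \<partial>lborel)
     = ennreal (d powr (2*g-2)) * JJ g"
    unfolding JJ_def by (rule nn_integral_cmult) auto
  also have "ennreal \<bar>d\<bar> * (ennreal (d powr (2*g-2)) * JJ g) = ennreal (d powr (2*g-1)) * JJ g"
  proof -
    have "\<bar>d\<bar> * d powr (2*g-2) = d powr (1 + (2*g-2))" using d
      by (simp add: powr_mult_base)
    also have "1 + (2*g-2) = 2*g-1" by simp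
    finally have e: "\<bar>d\<bar> * d powr (2*g-2) = d powr (2*g-1)" .
    have "ennreal \<bar>d\<bar> * (ennreal (d powr (2*g-2)) * JJ g) = (ennreal \<bar>d\<bar> * ennreal (d powr (2*g-2))) * JJ g"
      by (rule mult.assoc[symmetric])
    also have "ennreal \<bar>d\<bar> * ennreal (d powr (2*g-2)) = ennreal (\<bar>d\<bar> * d powr (2*g-2))"
      by (rule ennreal_mult[symmetric]) auto
    finally show ?thesis unfolding e .
  qed
  finally show ?thesis unfolding d_def .
qed



lemma LLi: "pair_sigma_finite lborel lborel"
  by (simp add: lborel.sigma_finite_measure_axioms pair_sigma_finite_def)

definition Wk :: "real \<Rightarrow> real \<Rightarrow> real" where
  "Wk b \<tau> = \<bar>\<tau>\<bar> powr (b - 1) / Gamma b"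

definition Vp :: "real \<Rightarrow> real \<Rightarrow> real \<Rightarrow> real" where
  "Vp b t \<tau> = indicator {-t..t} \<tau> * \<bar>\<tau>\<bar> powr (b - 1)"

lemma Wk_meas[measurable (raw)]:
  assumes [measurable]: "f \<in> borel_measurable M"
  shows "(\<lambda>z. Wk b (f z)) \<in> borel_measurable M"
  unfolding Wk_def by measurable

lemma Vp_meas[measurable (raw)]:
  assumes [measurable]: "f \<in> borel_measurable M"
  shows "(\<lambda>z. Vp b t (f z)) \<in> borel_measurable M"
  unfolding Vp_def by measurable

lemma ennreal_c_plus: "0 \<le> c \<Longrightarrow> 0 \<le> x \<Longrightarrow> 0 \<le> y \<Longrightarrow> ennreal (c * (x + y)) = ennreal c * (ennreal x + ennreal y)"
  by (simp add: ennreal_mult ennreal_plus)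

lemma Vp_nonneg: "Vp b t \<tau> \<ge> 0" by (simp add: Vp_def)

lemma Wk_nonneg: "b > 0 \<Longrightarrow> Wk b \<tau> \<ge> 0" by (simp add: Wk_def)

lemma Vp_fin:
  assumes "0 < b" "t \<ge> 0"
  shows "(\<integral>\<^sup>+\<tau>. ennreal (Vp b t \<tau>) \<partial>lborel) < \<infinity>"
proof -
  define P where "P = (\<lambda>\<tau>::real. indicator {0..t} \<tau> * \<tau> powr (b-1))"
  have [measurable]: "P \<in> borel_measurable borel" unfolding P_def by measurable
  have P1: "(\<integral>\<^sup>+\<tau>. ennreal (P \<tau>) \<partial>lborel) < \<infinity>"
    unfolding P_def using nn_powr_0c_fin[of "b-1" t] assms by simp
  have P2: "(\<integral>\<^sup>+\<tau>. ennreal (P (-\<tau>)) \<partial>lborel) = (\<integral>\<^sup>+\<tau>. ennreal (P \<tau>) \<partial>lborel)"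
    using nn_integral_real_affine[of "\<lambda>\<tau>. ennreal (P \<tau>)" "-1" 0] by simp
  have "(\<integral>\<^sup>+\<tau>. ennreal (Vp b t \<tau>) \<partial>lborel) \<le> (\<integral>\<^sup>+\<tau>. ennreal (P \<tau>) + ennreal (P (-\<tau>)) \<partial>lborel)"
  proof (rule nn_integral_mono)
    fix \<tau> :: real
    show "ennreal (Vp b t \<tau>) \<le> ennreal (P \<tau>) + ennreal (P (-\<tau>))"
    proof (cases "\<tau> \<ge> 0")
      case True
      then have "Vp b t \<tau> = P \<tau>" by (simp add: Vp_def P_def indicator_def)
      then show ?thesis by (simp add: add_increasing2)
    next
      case False
      then have "Vp b t \<tau> = P (-\<tau>)" by (simp add: Vp_def P_def indicator_def)
      then show ?thesis by (simp add: add_increasing)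
    qed
  qed
  also have "\<dots> = (\<integral>\<^sup>+\<tau>. ennreal (P \<tau>) \<partial>lborel) + (\<integral>\<^sup>+\<tau>. ennreal (P (-\<tau>)) \<partial>lborel)"
    by (rule nn_integral_add) auto
  also have "\<dots> < \<infinity>" using P1 P2 by simp
  finally show ?thesis .
qed

lemma Vp_shift1: "(\<integral>\<^sup>+s. ennreal (Vp b t (s - r)) \<partial>lborel) = (\<integral>\<^sup>+\<tau>. ennreal (Vp b t \<tau>) \<partial>lborel)"
  using nn_integral_real_affine[of "\<lambda>\<tau>. ennreal (Vp b t \<tau>)" 1 "-r"] by simp

lemma Vp_shift2: "(\<integral>\<^sup>+r. ennreal (Vp b t (s - r)) \<partial>lborel) = (\<integral>\<^sup>+\<tau>. ennreal (Vp b t \<tau>) \<partial>lborel)"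
  using nn_integral_real_affine[of "\<lambda>\<tau>. ennreal (Vp b t \<tau>)" "-1" s] by simp

context
  fixes b t :: real and U :: "real \<Rightarrow> 'a::{real_inner, banach, second_countable_topology}"
  assumes b: "0 < b" "b < 1" and t: "0 \<le> t"
    and Um[measurable]: "U \<in> borel_measurable lborel"
    and Ui: "integrable lborel (\<lambda>r. norm (U r)^2)"
    and Uz: "\<And>r. r \<notin> {0..t} \<Longrightarrow> U r = 0"
begin

lemma Ui_nn: "(\<integral>\<^sup>+r. ennreal (norm (U r)^2) \<partial>lborel) < \<infinity>"
  using Ui unfolding integrable_iff_bounded by simp

lemma stepA:
  "integrable (lborel \<Otimes>\<^sub>M lborel) (\<lambda>p. Wk b (fst p - snd p) * (norm (U (snd p)) * norm (U (fst p))))"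
proof -
  define MV where "MV = (\<integral>\<^sup>+\<tau>. ennreal (Vp b t \<tau>) \<partial>lborel)"
  have MV: "MV < \<infinity>" unfolding MV_def using Vp_fin b t by simp
  define c where "c = 1 / Gamma b"
  have c: "c \<ge> 0" using b by (simp add: c_def)
  have pw: "Wk b (s - r) * (norm (U r) * norm (U s)) \<le> c * (Vp b t (s - r) * norm (U r)^2 + Vp b t (s - r) * norm (U s)^2)" for s r
  proof (cases "U r = 0 \<or> U s = 0")
    case True
    then show ?thesis using c by (auto intro!: mult_nonneg_nonneg add_nonneg_nonneg simp: Vp_def)
  next
    case False
    then have "r \<in> {0..t}" "s \<in> {0..t}" using Uz by blast+
    then have "s - r \<in> {-t..t}" by auto
    have G: "Gamma b \<noteq> 0" using Gamma_real_pos[OF b(1)] by simp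
    have V: "Vp b t (s - r) = Gamma b * Wk b (s - r)" using \<open>s - r \<in> {-t..t}\<close> G by (simp add: Vp_def Wk_def)
    have "norm (U r) * norm (U s) \<le> norm (U r)^2 + norm (U s)^2"
      by (smt (verit) norm_ge_zero power2_eq_square mult_mono mult_nonneg_nonneg sum_squares_bound)
    then have "Wk b (s - r) * (norm (U r) * norm (U s)) \<le> Wk b (s - r) * (norm (U r)^2 + norm (U s)^2)"
      using Wk_nonneg[OF b(1)] by (intro mult_left_mono) auto
    also have "\<dots> = c * (Vp b t (s - r) * norm (U r)^2 + Vp b t (s - r) * norm (U s)^2)"
      using G unfolding V c_def by (simp add: algebra_simps)
    finally show ?thesis .
  qed
  have "(\<integral>\<^sup>+p. ennreal (norm (Wk b (fst p - snd p) * (norm (U (snd p)) * norm (U (fst p))))) \<partial>(lborel \<Otimes>\<^sub>M lborel))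
     \<le> (\<integral>\<^sup>+p. ennreal c * (ennreal (Vp b t (fst p - snd p) * norm (U (snd p))^2) + ennreal (Vp b t (fst p - snd p) * norm (U (fst p))^2)) \<partial>(lborel \<Otimes>\<^sub>M lborel))"
  proof (rule nn_integral_mono)
    fix p :: "real \<times> real"
    have "norm (Wk b (fst p - snd p) * (norm (U (snd p)) * norm (U (fst p)))) = Wk b (fst p - snd p) * (norm (U (snd p)) * norm (U (fst p)))"
      using Wk_nonneg[OF b(1)] by simp
    also have "\<dots> \<le> c * (Vp b t (fst p - snd p) * norm (U (snd p))^2 + Vp b t (fst p - snd p) * norm (U (fst p))^2)"
      by (rule pw)
    finally have "ennreal (norm (Wk b (fst p - snd p) * (norm (U (snd p)) * norm (U (fst p))))) \<le> ennreal (c * (Vp b t (fst p - snd p) * norm (U (snd p))^2 + Vp b t (fst p - snd p) * norm (U (fst p))^2))"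
      by (rule ennreal_leI)
    also have "\<dots> = ennreal c * (ennreal (Vp b t (fst p - snd p) * norm (U (snd p))^2) + ennreal (Vp b t (fst p - snd p) * norm (U (fst p))^2))"
      using c by (intro ennreal_c_plus) (auto simp: Vp_nonneg)
    finally show "ennreal (norm (Wk b (fst p - snd p) * (norm (U (snd p)) * norm (U (fst p))))) \<le> \<dots>" .
  qed
  also have "\<dots> = ennreal c * ((\<integral>\<^sup>+p. ennreal (Vp b t (fst p - snd p) * norm (U (snd p))^2) \<partial>(lborel \<Otimes>\<^sub>M lborel))
                + (\<integral>\<^sup>+p. ennreal (Vp b t (fst p - snd p) * norm (U (fst p))^2) \<partial>(lborel \<Otimes>\<^sub>M lborel)))"
  proof -
    have "(\<integral>\<^sup>+p. ennreal (Vp b t (fst p - snd p) * norm (U (snd p))^2) + ennreal (Vp b t (fst p - snd p) * norm (U (fst p))^2) \<partial>(lborel \<Otimes>\<^sub>M lborel))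
      = (\<integral>\<^sup>+p. ennreal (Vp b t (fst p - snd p) * norm (U (snd p))^2) \<partial>(lborel \<Otimes>\<^sub>M lborel))
                + (\<integral>\<^sup>+p. ennreal (Vp b t (fst p - snd p) * norm (U (fst p))^2) \<partial>(lborel \<Otimes>\<^sub>M lborel))"
      by (rule nn_integral_add) auto
    then show ?thesis by (subst nn_integral_cmult) auto
  qed
  also have "(\<integral>\<^sup>+p. ennreal (Vp b t (fst p - snd p) * norm (U (snd p))^2) \<partial>(lborel \<Otimes>\<^sub>M lborel))
      = (\<integral>\<^sup>+r. \<integral>\<^sup>+s. ennreal (Vp b t (s - r) * norm (U r)^2) \<partial>lborel \<partial>lborel)"
    by (subst pair_sigma_finite.nn_integral_snd[OF LLi, symmetric]) auto
  also have "\<dots> = (\<integral>\<^sup>+r. MV * ennreal (norm (U r)^2) \<partial>lborel)"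
  proof (rule nn_integral_cong)
    fix r :: real
    have "(\<integral>\<^sup>+s. ennreal (Vp b t (s - r) * norm (U r)^2) \<partial>lborel) = (\<integral>\<^sup>+s. ennreal (Vp b t (s - r)) * ennreal (norm (U r)^2) \<partial>lborel)"
      by (intro nn_integral_cong) (simp add: ennreal_mult Vp_def)
    also have "\<dots> = MV * ennreal (norm (U r)^2)"
      unfolding MV_def by (subst nn_integral_multc) (auto simp: Vp_shift1)
    finally show "(\<integral>\<^sup>+s. ennreal (Vp b t (s - r) * norm (U r)^2) \<partial>lborel) = MV * ennreal (norm (U r)^2)" .
  qed
  also have "\<dots> = MV * (\<integral>\<^sup>+r. ennreal (norm (U r)^2) \<partial>lborel)"
    by (rule nn_integral_cmult) auto
  also have "(\<integral>\<^sup>+p. ennreal (Vp b t (fst p - snd p) * norm (U (fst p))^2) \<partial>(lborel \<Otimes>\<^sub>M lborel))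
      = (\<integral>\<^sup>+s. \<integral>\<^sup>+r. ennreal (Vp b t (s - r) * norm (U s)^2) \<partial>lborel \<partial>lborel)"
    by (subst sigma_finite_measure.nn_integral_fst[OF lborel.sigma_finite_measure_axioms, symmetric]) auto
  also have "\<dots> = (\<integral>\<^sup>+s. MV * ennreal (norm (U s)^2) \<partial>lborel)"
  proof (rule nn_integral_cong)
    fix s :: real
    have "(\<integral>\<^sup>+r. ennreal (Vp b t (s - r) * norm (U s)^2) \<partial>lborel) = (\<integral>\<^sup>+r. ennreal (Vp b t (s - r)) * ennreal (norm (U s)^2) \<partial>lborel)"
      by (intro nn_integral_cong) (simp add: ennreal_mult Vp_def)
    also have "\<dots> = MV * ennreal (norm (U s)^2)"
      unfolding MV_def by (subst nn_integral_multc) (auto simp: Vp_shift2)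
    finally show "(\<integral>\<^sup>+r. ennreal (Vp b t (s - r) * norm (U s)^2) \<partial>lborel) = MV * ennreal (norm (U s)^2)" .
  qed
  also have "\<dots> = MV * (\<integral>\<^sup>+r. ennreal (norm (U r)^2) \<partial>lborel)"
    by (rule nn_integral_cmult) auto
  also have "ennreal c * (MV * (\<integral>\<^sup>+r. ennreal (norm (U r)^2) \<partial>lborel) + MV * (\<integral>\<^sup>+r. ennreal (norm (U r)^2) \<partial>lborel)) < \<infinity>"
    using MV Ui_nn by (simp add: ennreal_mult_less_top)
  finally show ?thesis unfolding integrable_iff_bounded by auto
qed

end


definition G0 :: "real \<Rightarrow> real \<Rightarrow> real \<Rightarrow> real" where
  "G0 b s r = (if r < s then omega b (s - r) else 0)"

lemma G0_meas[measurable (raw)]: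
  assumes [measurable]: "f \<in> borel_measurable M" "h \<in> borel_measurable M"
  shows "(\<lambda>z. G0 b (f z) (h z)) \<in> borel_measurable M"
  unfolding G0_def omega_def by measurable

lemma G0_le: "b > 0 \<Longrightarrow> \<bar>G0 b s r\<bar> \<le> Wk b (s - r)"
  by (simp add: G0_def omega_def Wk_def Wk_nonneg[unfolded Wk_def])

lemma Wk_zero: "Wk b 0 = 0" by (simp add: Wk_def)

lemma G0_sym: "Wk b (s - r) = G0 b s r + G0 b r s"
proof (cases "r < s")
  case True then show ?thesis by (simp add: G0_def Wk_def omega_def)
next
  case False
  show ?thesis
  proof (cases "r = s")
    case True then show ?thesis by (simp add: G0_def Wk_def)
  next
    case False
    then have "s < r" using \<open>\<not> r < s\<close> by simp
    then show ?thesis by (simp add: G0_def Wk_def omega_def abs_minus_commute)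
  qed
qed

context
  fixes b t :: real and U :: "real \<Rightarrow> 'a::{real_inner, banach, second_countable_topology}"
  assumes b: "0 < b" "b < 1" and t: "0 \<le> t"
    and Um[measurable]: "U \<in> borel_measurable lborel"
    and Ui: "integrable lborel (\<lambda>r. norm (U r)^2)"
    and Uz: "\<And>r. r \<notin> {0..t} \<Longrightarrow> U r = 0"
begin

lemma stepA': "integrable (lborel \<Otimes>\<^sub>M lborel) (\<lambda>p. Wk b (fst p - snd p) * (norm (U (snd p)) * norm (U (fst p))))"
  by (rule stepA[OF b t Um Ui Uz])

lemma F_int: "integrable (lborel \<Otimes>\<^sub>M lborel) (\<lambda>p. G0 b (fst p) (snd p) * (U (snd p) \<bullet> U (fst p)))"
proof (rule Bochner_Integration.integrable_bound[OF stepA'])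
  show "(\<lambda>p. G0 b (fst p) (snd p) * (U (snd p) \<bullet> U (fst p))) \<in> borel_measurable (lborel \<Otimes>\<^sub>M lborel)"
    by measurable
  show "AE p in lborel \<Otimes>\<^sub>M lborel. norm (G0 b (fst p) (snd p) * (U (snd p) \<bullet> U (fst p)))
      \<le> norm (Wk b (fst p - snd p) * (norm (U (snd p)) * norm (U (fst p))))"
  proof (intro AE_I2)
    fix p :: "real \<times> real"
    have "norm (G0 b (fst p) (snd p) * (U (snd p) \<bullet> U (fst p))) = \<bar>G0 b (fst p) (snd p)\<bar> * \<bar>U (snd p) \<bullet> U (fst p)\<bar>"
      by (simp add: abs_mult)
    also have "\<dots> \<le> Wk b (fst p - snd p) * (norm (U (snd p)) * norm (U (fst p)))"
      using G0_le[OF b(1)] Cauchy_Schwarz_ineq2 Wk_nonneg[OF b(1)] by (intro mult_mono) auto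
    also have "\<dots> = norm (Wk b (fst p - snd p) * (norm (U (snd p)) * norm (U (fst p))))"
      using Wk_nonneg[OF b(1)] by simp
    finally show "norm (G0 b (fst p) (snd p) * (U (snd p) \<bullet> U (fst p))) \<le> \<dots>" .
  qed
qed

lemma Fs_int: "integrable (lborel \<Otimes>\<^sub>M lborel) (\<lambda>p. Wk b (fst p - snd p) * (U (snd p) \<bullet> U (fst p)))"
proof (rule Bochner_Integration.integrable_bound[OF stepA'])
  show "(\<lambda>p. Wk b (fst p - snd p) * (U (snd p) \<bullet> U (fst p))) \<in> borel_measurable (lborel \<Otimes>\<^sub>M lborel)"
    by measurable
  show "AE p in lborel \<Otimes>\<^sub>M lborel. norm (Wk b (fst p - snd p) * (U (snd p) \<bullet> U (fst p)))
      \<le> norm (Wk b (fst p - snd p) * (norm (U (snd p)) * norm (U (fst p))))"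
  proof (intro AE_I2)
    fix p :: "real \<times> real"
    have "Wk b (fst p - snd p) * \<bar>U (snd p) \<bullet> U (fst p)\<bar> \<le> Wk b (fst p - snd p) * (norm (U (snd p)) * norm (U (fst p)))"
      using Wk_nonneg[OF b(1)] Cauchy_Schwarz_ineq2 by (intro mult_left_mono) auto
    then show "norm (Wk b (fst p - snd p) * (U (snd p) \<bullet> U (fst p)))
      \<le> norm (Wk b (fst p - snd p) * (norm (U (snd p)) * norm (U (fst p))))"
      using Wk_nonneg[OF b(1)] by (simp add: abs_mult)
  qed
qed

lemma repr_inner:
  "(\<integral>s. (\<integral>r. G0 b s r *\<^sub>R U r \<partial>lborel) \<bullet> U s \<partial>lborel)
   = integral\<^sup>L (lborel \<Otimes>\<^sub>M lborel) (\<lambda>p. G0 b (fst p) (snd p) * (U (snd p) \<bullet> U (fst p)))"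
proof -
  have "integral\<^sup>L (lborel \<Otimes>\<^sub>M lborel) (\<lambda>p. G0 b (fst p) (snd p) * (U (snd p) \<bullet> U (fst p)))
     = (\<integral>s. (\<integral>r. G0 b s r * (U r \<bullet> U s) \<partial>lborel) \<partial>lborel)"
    using lborel_pair.integral_fst'[OF F_int] by simp
  also have "\<dots> = (\<integral>s. (\<integral>r. G0 b s r *\<^sub>R U r \<partial>lborel) \<bullet> U s \<partial>lborel)"
  proof (rule integral_cong_AE)
    show "(\<lambda>s. \<integral>r. G0 b s r * (U r \<bullet> U s) \<partial>lborel) \<in> borel_measurable lborel"
      using borel_measurable_integrable[OF lborel_pair.integrable_fst'[OF F_int]] by simp
    show "(\<lambda>s. (\<integral>r. G0 b s r *\<^sub>R U r \<partial>lborel) \<bullet> U s) \<in> borel_measurable lborel"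
    proof -
      have "(\<lambda>s. \<integral>r. G0 b s r *\<^sub>R U r \<partial>lborel) \<in> borel_measurable lborel"
        by (rule lborel.borel_measurable_lebesgue_integral) measurable
      then show ?thesis by measurable
    qed
    show "AE s in lborel. (\<integral>r. G0 b s r * (U r \<bullet> U s) \<partial>lborel) = (\<integral>r. G0 b s r *\<^sub>R U r \<partial>lborel) \<bullet> U s"
      using lborel_pair.AE_integrable_fst'[OF stepA']
    proof eventually_elim
      fix s assume I: "integrable lborel (\<lambda>r. Wk b (fst (s, r) - snd (s, r)) * (norm (U (snd (s, r))) * norm (U (fst (s, r)))))"
      show "(\<integral>r. G0 b s r * (U r \<bullet> U s) \<partial>lborel) = (\<integral>r. G0 b s r *\<^sub>R U r \<partial>lborel) \<bullet> U s"
      proof (cases "U s = 0")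
        case True then show ?thesis by simp
      next
        case False
        have "integrable lborel (\<lambda>r. norm (U s) * (Wk b (s - r) * norm (U r)))"
          using I by (simp add: mult_ac)
        then have I2: "integrable lborel (\<lambda>r. Wk b (s - r) * norm (U r))"
          using False by simp
        have I3: "integrable lborel (\<lambda>r. G0 b s r *\<^sub>R U r)"
        proof (rule Bochner_Integration.integrable_bound[OF I2])
          show "(\<lambda>r. G0 b s r *\<^sub>R U r) \<in> borel_measurable lborel" by measurable
          show "AE r in lborel. norm (G0 b s r *\<^sub>R U r) \<le> norm (Wk b (s - r) * norm (U r))"
            using G0_le[OF b(1)] Wk_nonneg[OF b(1)] by (intro AE_I2) (simp add: mult_right_mono)
        qed
        have "(\<integral>r. G0 b s r * (U r \<bullet> U s) \<partial>lborel) = (\<integral>r. (G0 b s r *\<^sub>R U r) \<bullet> U s \<partial>lborel)"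
          by simp
        also have "\<dots> = (\<integral>r. G0 b s r *\<^sub>R U r \<partial>lborel) \<bullet> U s"
          using I3 by (rule integral_inner_left)
        finally show ?thesis .
      qed
    qed
  qed
  finally show ?thesis by simp
qed

lemma sym_step:
  "integral\<^sup>L (lborel \<Otimes>\<^sub>M lborel) (\<lambda>p. Wk b (fst p - snd p) * (U (snd p) \<bullet> U (fst p)))
   = 2 * integral\<^sup>L (lborel \<Otimes>\<^sub>M lborel) (\<lambda>p. G0 b (fst p) (snd p) * (U (snd p) \<bullet> U (fst p)))"
proof -
  define F where "F = (\<lambda>p. G0 b (fst p) (snd p) * (U (snd p) \<bullet> U (fst p)))"
  have Fm[measurable]: "F \<in> borel_measurable (lborel \<Otimes>\<^sub>M lborel)" unfolding F_def by measurable
  have FI: "integrable (lborel \<Otimes>\<^sub>M lborel) F" unfolding F_def by (rule F_int)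
  have FI2: "integrable (lborel \<Otimes>\<^sub>M lborel) (\<lambda>(x,y). F (y,x))"
    by (rule lborel_pair.integrable_product_swap[OF FI])
  have eq: "(\<lambda>p. Wk b (fst p - snd p) * (U (snd p) \<bullet> U (fst p))) = (\<lambda>p. F p + (\<lambda>(x,y). F (y,x)) p)"
  proof
    fix p :: "real \<times> real"
    obtain s r where p: "p = (s, r)" by (cases p)
    show "Wk b (fst p - snd p) * (U (snd p) \<bullet> U (fst p)) = F p + (\<lambda>(x,y). F (y,x)) p"
      unfolding p F_def using G0_sym[of b s r] by (simp add: algebra_simps inner_commute)
  qed
  have "integral\<^sup>L (lborel \<Otimes>\<^sub>M lborel) (\<lambda>p. Wk b (fst p - snd p) * (U (snd p) \<bullet> U (fst p)))
     = integral\<^sup>L (lborel \<Otimes>\<^sub>M lborel) F + integral\<^sup>L (lborel \<Otimes>\<^sub>M lborel) (\<lambda>(x,y). F (y,x))"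
    unfolding eq by (rule Bochner_Integration.integral_add[OF FI FI2])
  also have "integral\<^sup>L (lborel \<Otimes>\<^sub>M lborel) (\<lambda>(x,y). F (y,x)) = integral\<^sup>L (lborel \<Otimes>\<^sub>M lborel) F"
    by (rule lborel_pair.integral_product_swap[OF Fm])
  finally show ?thesis unfolding F_def by simp
qed

end


lemma LL3: "pair_sigma_finite lborel (lborel \<Otimes>\<^sub>M lborel)"
  by (simp add: pair_sigma_finite_def lborel.sigma_finite_measure_axioms lborel_pair.P.sigma_finite_measure_axioms)

lemma AE_offdiag: "AE p in (lborel::real measure) \<Otimes>\<^sub>M (lborel::real measure). fst p \<noteq> snd p"
proof -
  have 1: "AE (s::real) in lborel. AE (r::real) in lborel. s \<noteq> r"
  proof (rule AE_I2)
    fix s :: real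
    show "AE r in lborel. s \<noteq> r" using AE_lborel_singleton[of s] by eventually_elim auto
  qed
  have 2: "{x \<in> space ((lborel::real measure) \<Otimes>\<^sub>M (lborel::real measure)). fst x \<noteq> snd x} \<in> sets (lborel \<Otimes>\<^sub>M lborel)"
    by measurable
  have 3: "(AE (s::real) in lborel. AE (r::real) in lborel. s \<noteq> r) = (AE p in (lborel::real measure) \<Otimes>\<^sub>M (lborel::real measure). fst p \<noteq> snd p)"
    using lborel_pair.AE_pair_iff[where P="\<lambda>(s::real) (r::real). s \<noteq> r", OF 2] by simp
  show ?thesis using 1 3 by simp
qed

lemma kint_eq:
  assumes "s \<noteq> r" "0 < b"
  shows "(\<integral>\<^sup>+x. ennreal (kk (b/2) x r * kk (b/2) x s) \<partial>lborel) = ennreal (\<bar>s - r\<bar> powr (b-1)) * JJ (b/2)"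
proof (cases "r < s")
  case True
  then show ?thesis using kernel_id[OF True, of "b/2"] assms by simp
next
  case False
  then have "s < r" using assms by simp
  then show ?thesis using kernel_id[OF \<open>s < r\<close>, of "b/2"] assms by (simp add: mult.commute abs_minus_commute)
qed

definition H3 :: "real \<Rightarrow> (real \<Rightarrow> 'a::real_inner) \<Rightarrow> real \<times> real \<times> real \<Rightarrow> real" where
  "H3 b U = (\<lambda>(x, p). kk (b/2) x (snd p) * kk (b/2) x (fst p) * (norm (U (snd p)) * norm (U (fst p))))"
definition T3 :: "real \<Rightarrow> (real \<Rightarrow> 'a::real_inner) \<Rightarrow> real \<times> real \<times> real \<Rightarrow> real" where
  "T3 b U = (\<lambda>(x, p). kk (b/2) x (snd p) * kk (b/2) x (fst p) * (U (snd p) \<bullet> U (fst p)))"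

context
  fixes b t :: real and U :: "real \<Rightarrow> 'a::{real_inner, banach, second_countable_topology}"
  assumes b: "0 < b" "b < 1" and t: "0 \<le> t"
    and Um[measurable]: "U \<in> borel_measurable lborel"
    and Ui: "integrable lborel (\<lambda>r. norm (U r)^2)"
    and Uz: "\<And>r. r \<notin> {0..t} \<Longrightarrow> U r = 0"
begin

lemma stepA'': "integrable (lborel \<Otimes>\<^sub>M lborel) (\<lambda>p. Wk b (fst p - snd p) * (norm (U (snd p)) * norm (U (fst p))))"
  by (rule stepA[OF b t Um Ui Uz])


lemma H3m[measurable]: "H3 b U \<in> borel_measurable (lborel \<Otimes>\<^sub>M (lborel \<Otimes>\<^sub>M lborel))"
  unfolding H3_def by measurable
lemma T3m[measurable]: "T3 b U \<in> borel_measurable (lborel \<Otimes>\<^sub>M (lborel \<Otimes>\<^sub>M lborel))"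
  unfolding T3_def by measurable

lemma H3_nonneg: "H3 b U z \<ge> 0"
  unfolding H3_def by (auto simp: case_prod_beta kk_nonneg)

lemma T3_le: "norm (T3 b U z) \<le> H3 b U z"
proof -
  obtain x s r where z: "z = (x, (s, r))" by (metis prod.exhaust)
  have "\<bar>U r \<bullet> U s\<bar> \<le> norm (U r) * norm (U s)" by (rule Cauchy_Schwarz_ineq2)
  then show ?thesis unfolding z T3_def H3_def
    by (simp add: abs_mult kk_nonneg mult_left_mono)
qed

lemma Gb: "Gamma b > 0" using b by simp

lemma JJb: "JJ (b/2) > 0" "JJ (b/2) < \<infinity>"
  using JJ_pos[of "b/2"] JJ_fin[of "b/2"] b by auto

lemma H3_nn: "(\<integral>\<^sup>+z. ennreal (H3 b U z) \<partial>(lborel \<Otimes>\<^sub>M (lborel \<Otimes>\<^sub>M lborel)))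
   = ennreal (Gamma b) * JJ (b/2) * (\<integral>\<^sup>+p. ennreal (Wk b (fst p - snd p) * (norm (U (snd p)) * norm (U (fst p)))) \<partial>(lborel \<Otimes>\<^sub>M lborel))"
proof -
  have "(\<integral>\<^sup>+z. ennreal (H3 b U z) \<partial>(lborel \<Otimes>\<^sub>M (lborel \<Otimes>\<^sub>M lborel)))
      = (\<integral>\<^sup>+p. \<integral>\<^sup>+x. ennreal (H3 b U (x, p)) \<partial>lborel \<partial>(lborel \<Otimes>\<^sub>M lborel))"
    by (rule pair_sigma_finite.nn_integral_snd[OF LL3, symmetric]) measurable
  also have "\<dots> = (\<integral>\<^sup>+p. ennreal (Gamma b) * JJ (b/2) * ennreal (Wk b (fst p - snd p) * (norm (U (snd p)) * norm (U (fst p)))) \<partial>(lborel \<Otimes>\<^sub>M lborel))"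
  proof (rule nn_integral_cong_AE)
    show "AE p in lborel \<Otimes>\<^sub>M lborel. (\<integral>\<^sup>+x. ennreal (H3 b U (x, p)) \<partial>lborel) =
        ennreal (Gamma b) * JJ (b/2) * ennreal (Wk b (fst p - snd p) * (norm (U (snd p)) * norm (U (fst p))))"
      using AE_offdiag
    proof eventually_elim
      fix p :: "real \<times> real" assume ne: "fst p \<noteq> snd p"
      obtain s r where p: "p = (s, r)" by (cases p)
      have ne': "s \<noteq> r" using ne p by simp
      have "(\<integral>\<^sup>+x. ennreal (H3 b U (x, p)) \<partial>lborel)
          = (\<integral>\<^sup>+x. ennreal (kk (b/2) x r * kk (b/2) x s) * ennreal (norm (U r) * norm (U s)) \<partial>lborel)"
        unfolding p H3_def by (intro nn_integral_cong) (simp add: ennreal_mult kk_nonneg)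
      also have "\<dots> = (\<integral>\<^sup>+x. ennreal (kk (b/2) x r * kk (b/2) x s) \<partial>lborel) * ennreal (norm (U r) * norm (U s))"
        by (rule nn_integral_multc) measurable
      also have "\<dots> = ennreal (\<bar>s - r\<bar> powr (b-1)) * JJ (b/2) * ennreal (norm (U r) * norm (U s))"
        using kint_eq[OF ne' b(1)] by simp
      also have "\<bar>s - r\<bar> powr (b-1) = Gamma b * Wk b (s - r)"
        using Gb by (simp add: Wk_def)
      also have "ennreal (Gamma b * Wk b (s - r)) * JJ (b/2) * ennreal (norm (U r) * norm (U s))
          = ennreal (Gamma b) * JJ (b/2) * ennreal (Wk b (s - r) * (norm (U r) * norm (U s)))"
        using Gb Wk_nonneg[OF b(1)] by (simp add: ennreal_mult mult_ac)
      finally show "(\<integral>\<^sup>+x. ennreal (H3 b U (x, p)) \<partial>lborel) =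
        ennreal (Gamma b) * JJ (b/2) * ennreal (Wk b (fst p - snd p) * (norm (U (snd p)) * norm (U (fst p))))"
        unfolding p by simp
    qed
  qed
  also have "\<dots> = ennreal (Gamma b) * JJ (b/2) * (\<integral>\<^sup>+p. ennreal (Wk b (fst p - snd p) * (norm (U (snd p)) * norm (U (fst p)))) \<partial>(lborel \<Otimes>\<^sub>M lborel))"
    by (rule nn_integral_cmult) measurable
  finally show ?thesis .
qed

lemma H3_fin: "(\<integral>\<^sup>+z. ennreal (H3 b U z) \<partial>(lborel \<Otimes>\<^sub>M (lborel \<Otimes>\<^sub>M lborel))) < \<infinity>"
proof -
  have "(\<integral>\<^sup>+p. ennreal (norm (Wk b (fst p - snd p) * (norm (U (snd p)) * norm (U (fst p))))) \<partial>(lborel \<Otimes>\<^sub>M lborel)) < \<infinity>"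
    using stepA'' unfolding integrable_iff_bounded by simp
  moreover have "(\<lambda>p. ennreal (norm (Wk b (fst p - snd p) * (norm (U (snd p)) * norm (U (fst p))))))
    = (\<lambda>p. ennreal (Wk b (fst p - snd p) * (norm (U (snd p)) * norm (U (fst p)))))"
    using Wk_nonneg[OF b(1)] by (simp add: abs_mult)
  ultimately show ?thesis unfolding H3_nn using JJb Gb by (simp add: ennreal_mult_less_top)
qed

lemma T3_int: "integrable (lborel \<Otimes>\<^sub>M (lborel \<Otimes>\<^sub>M lborel)) (T3 b U)"
  unfolding integrable_iff_bounded
proof
  show "T3 b U \<in> borel_measurable (lborel \<Otimes>\<^sub>M (lborel \<Otimes>\<^sub>M lborel))" by measurable
  have "(\<integral>\<^sup>+z. ennreal (norm (T3 b U z)) \<partial>(lborel \<Otimes>\<^sub>M (lborel \<Otimes>\<^sub>M lborel))) \<le> (\<integral>\<^sup>+z. ennreal (H3 b U z) \<partial>(lborel \<Otimes>\<^sub>M (lborel \<Otimes>\<^sub>M lborel)))"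
    by (intro nn_integral_mono ennreal_leI T3_le)
  then show "(\<integral>\<^sup>+z. ennreal (norm (T3 b U z)) \<partial>(lborel \<Otimes>\<^sub>M (lborel \<Otimes>\<^sub>M lborel))) < \<infinity>"
    using H3_fin by (simp add: order_le_less_trans)
qed

end


context
  fixes b t :: real and U :: "real \<Rightarrow> 'a::{real_inner, banach, second_countable_topology}"
  assumes b: "0 < b" "b < 1" and t: "0 \<le> t"
    and Um[measurable]: "U \<in> borel_measurable lborel"
    and Ui: "integrable lborel (\<lambda>r. norm (U r)^2)"
    and Uz: "\<And>r. r \<notin> {0..t} \<Longrightarrow> U r = 0"
begin

abbreviation "M3 \<equiv> (lborel::real measure) \<Otimes>\<^sub>M ((lborel::real measure) \<Otimes>\<^sub>M (lborel::real measure))"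

lemmas T3_def' = T3_def
lemmas H3_def' = H3_def
lemmas H3m'[measurable] = H3m[OF b t Um Ui Uz]
lemmas T3m'[measurable] = T3m[OF b t Um Ui Uz]

lemma T3_int': "integrable M3 (T3 b U)"
  by (rule T3_int[OF b t Um Ui Uz])

lemma H3_fin': "(\<integral>\<^sup>+z. ennreal (H3 b U z) \<partial>M3) < \<infinity>"
  by (rule H3_fin[OF b t Um Ui Uz])

lemma D3: "integral\<^sup>L M3 (T3 b U) = Gamma b * enn2real (JJ (b/2)) *
   integral\<^sup>L (lborel \<Otimes>\<^sub>M lborel) (\<lambda>p. Wk b (fst p - snd p) * (U (snd p) \<bullet> U (fst p)))"
proof -
  have I: "integrable M3 (\<lambda>(x, p). T3 b U (x, p))" using T3_int' by simp
  have "integral\<^sup>L M3 (T3 b U) = (\<integral>p. (\<integral>x. T3 b U (x, p) \<partial>lborel) \<partial>(lborel \<Otimes>\<^sub>M lborel))"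
    using pair_sigma_finite.integral_snd[OF LL3 I] by simp
  also have "\<dots> = (\<integral>p. Gamma b * enn2real (JJ (b/2)) * (Wk b (fst p - snd p) * (U (snd p) \<bullet> U (fst p))) \<partial>(lborel \<Otimes>\<^sub>M lborel))"
  proof (rule integral_cong_AE)
    show "(\<lambda>p. \<integral>x. T3 b U (x, p) \<partial>lborel) \<in> borel_measurable (lborel \<Otimes>\<^sub>M lborel)"
      using borel_measurable_integrable[OF pair_sigma_finite.integrable_snd[OF LL3 I]] by simp
    show "(\<lambda>p. Gamma b * enn2real (JJ (b/2)) * (Wk b (fst p - snd p) * (U (snd p) \<bullet> U (fst p)))) \<in> borel_measurable (lborel \<Otimes>\<^sub>M lborel)"
      by measurable
    show "AE p in lborel \<Otimes>\<^sub>M lborel. (\<integral>x. T3 b U (x, p) \<partial>lborel) = Gamma b * enn2real (JJ (b/2)) * (Wk b (fst p - snd p) * (U (snd p) \<bullet> U (fst p)))"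
      using AE_offdiag
    proof eventually_elim
      fix p :: "real \<times> real" assume ne: "fst p \<noteq> snd p"
      obtain s r where p: "p = (s, r)" by (cases p)
      have ne': "s \<noteq> r" using ne p by simp
      have "(\<integral>x. T3 b U (x, p) \<partial>lborel) = (\<integral>x. kk (b/2) x r * kk (b/2) x s * (U r \<bullet> U s) \<partial>lborel)"
        unfolding p by (simp add: T3_def')
      also have "\<dots> = (\<integral>x. kk (b/2) x r * kk (b/2) x s \<partial>lborel) * (U r \<bullet> U s)"
        by (rule integral_mult_left_zero)
      also have "(\<integral>x. kk (b/2) x r * kk (b/2) x s \<partial>lborel) = enn2real (\<integral>\<^sup>+x. ennreal (kk (b/2) x r * kk (b/2) x s) \<partial>lborel)"
        by (rule integral_eq_nn_integral) (auto simp: kk_nonneg)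
      also have "\<dots> = \<bar>s - r\<bar> powr (b-1) * enn2real (JJ (b/2))"
        unfolding kint_eq[OF ne' b(1)] by (simp add: enn2real_mult)
      also have "\<bar>s - r\<bar> powr (b-1) = Gamma b * Wk b (s - r)"
        using Gb[OF b t Um Ui Uz] by (simp add: Wk_def)
      finally show "(\<integral>x. T3 b U (x, p) \<partial>lborel) = Gamma b * enn2real (JJ (b/2)) * (Wk b (fst p - snd p) * (U (snd p) \<bullet> U (fst p)))"
        unfolding p by (simp add: mult_ac)
    qed
  qed
  also have "\<dots> = Gamma b * enn2real (JJ (b/2)) * integral\<^sup>L (lborel \<Otimes>\<^sub>M lborel) (\<lambda>p. Wk b (fst p - snd p) * (U (snd p) \<bullet> U (fst p)))"
    by (rule integral_mult_right_zero)
  finally show ?thesis .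
qed

lemma D4: "integral\<^sup>L M3 (T3 b U) \<ge> 0"
proof -
  have "integral\<^sup>L M3 (T3 b U) = (\<integral>x. (\<integral>p. T3 b U (x, p) \<partial>(lborel \<Otimes>\<^sub>M lborel)) \<partial>lborel)"
    using pair_sigma_finite.integral_fst'[OF LL3 T3_int'] by simp
  also have "\<dots> \<ge> 0"
  proof (rule integral_nonneg_AE)
    have "(\<integral>\<^sup>+x. (\<integral>\<^sup>+p. ennreal (H3 b U (x, p)) \<partial>(lborel \<Otimes>\<^sub>M lborel)) \<partial>lborel) = (\<integral>\<^sup>+z. ennreal (H3 b U z) \<partial>M3)"
      by (rule sigma_finite_measure.nn_integral_fst[OF lborel_pair.P.sigma_finite_measure_axioms]) measurable
    then have "(\<integral>\<^sup>+x. (\<integral>\<^sup>+p. ennreal (H3 b U (x, p)) \<partial>(lborel \<Otimes>\<^sub>M lborel)) \<partial>lborel) \<noteq> \<infinity>"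
      using H3_fin' by simp
    then have AEf: "AE x in lborel. (\<integral>\<^sup>+p. ennreal (H3 b U (x, p)) \<partial>(lborel \<Otimes>\<^sub>M lborel)) \<noteq> \<infinity>"
      by (intro nn_integral_PInf_AE sigma_finite_measure.borel_measurable_nn_integral_fst[OF lborel_pair.P.sigma_finite_measure_axioms]) measurable
    show "AE x in lborel. 0 \<le> (\<integral>p. T3 b U (x, p) \<partial>(lborel \<Otimes>\<^sub>M lborel))"
      using AEf
    proof eventually_elim
      fix x :: real
      assume fin: "(\<integral>\<^sup>+p. ennreal (H3 b U (x, p)) \<partial>(lborel \<Otimes>\<^sub>M lborel)) \<noteq> \<infinity>"
      define a where "a = (\<lambda>r. kk (b/2) x r)"
      have am[measurable]: "a \<in> borel_measurable lborel" unfolding a_def by measurable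
      have a0: "\<And>r. a r \<ge> 0" unfolding a_def by (rule kk_nonneg)
      define I where "I = (\<integral>\<^sup>+r. ennreal (a r * norm (U r)) \<partial>lborel)"
      have "(\<integral>\<^sup>+p. ennreal (H3 b U (x, p)) \<partial>(lborel \<Otimes>\<^sub>M lborel))
          = (\<integral>\<^sup>+s. \<integral>\<^sup>+r. ennreal (a r * norm (U r)) * ennreal (a s * norm (U s)) \<partial>lborel \<partial>lborel)"
      proof -
        have "(\<integral>\<^sup>+p. ennreal (H3 b U (x, p)) \<partial>(lborel \<Otimes>\<^sub>M lborel))
           = (\<integral>\<^sup>+s. \<integral>\<^sup>+r. ennreal (H3 b U (x, (s, r))) \<partial>lborel \<partial>lborel)"
          using sigma_finite_measure.nn_integral_fst[OF lborel.sigma_finite_measure_axioms, of "\<lambda>p. ennreal (H3 b U (x, p))" lborel]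
          by simp
        also have "\<dots> = (\<integral>\<^sup>+s. \<integral>\<^sup>+r. ennreal (a r * norm (U r)) * ennreal (a s * norm (U s)) \<partial>lborel \<partial>lborel)"
          unfolding a_def by (intro nn_integral_cong) (simp add: H3_def' ennreal_mult[symmetric] kk_nonneg mult_ac)
        finally show ?thesis .
      qed
      also have "\<dots> = (\<integral>\<^sup>+s. I * ennreal (a s * norm (U s)) \<partial>lborel)"
        unfolding I_def by (intro nn_integral_cong nn_integral_multc) measurable
      also have "\<dots> = I * I"
        unfolding I_def by (rule nn_integral_cmult) measurable
      finally have "I * I \<noteq> \<infinity>" using fin by simp
      then have "I * I < top" by (simp add: top.not_eq_extremum)
      then have "I = 0 \<or> I < top" by (simp add: ennreal_mult_less_top)
      then have Ifin: "I < \<infinity>" by auto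
      have VI: "integrable lborel (\<lambda>r. a r *\<^sub>R U r)"
        unfolding integrable_iff_bounded
      proof
        show "(\<lambda>r. a r *\<^sub>R U r) \<in> borel_measurable lborel" by measurable
        show "(\<integral>\<^sup>+r. ennreal (norm (a r *\<^sub>R U r)) \<partial>lborel) < \<infinity>"
          using Ifin unfolding I_def using a0 by simp
      qed
      define V where "V = (\<integral>r. a r *\<^sub>R U r \<partial>lborel)"
      have TI: "integrable (lborel \<Otimes>\<^sub>M lborel) (\<lambda>p. T3 b U (x, p))"
        unfolding integrable_iff_bounded
      proof
        show "(\<lambda>p. T3 b U (x, p)) \<in> borel_measurable (lborel \<Otimes>\<^sub>M lborel)" by measurable
        have "(\<integral>\<^sup>+p. ennreal (norm (T3 b U (x, p))) \<partial>(lborel \<Otimes>\<^sub>M lborel)) \<le> (\<integral>\<^sup>+p. ennreal (H3 b U (x, p)) \<partial>(lborel \<Otimes>\<^sub>M lborel))"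
          by (intro nn_integral_mono ennreal_leI T3_le[OF b t Um Ui Uz])
        then show "(\<integral>\<^sup>+p. ennreal (norm (T3 b U (x, p))) \<partial>(lborel \<Otimes>\<^sub>M lborel)) < \<infinity>"
          using fin by (simp add: order_le_less_trans top.not_eq_extremum)
      qed
      have "(\<integral>p. T3 b U (x, p) \<partial>(lborel \<Otimes>\<^sub>M lborel)) = (\<integral>s. (\<integral>r. T3 b U (x, (s, r)) \<partial>lborel) \<partial>lborel)"
        using lborel_pair.integral_fst'[OF TI] by simp
      also have "\<dots> = (\<integral>s. (\<integral>r. (a r *\<^sub>R U r) \<bullet> (a s *\<^sub>R U s) \<partial>lborel) \<partial>lborel)"
        unfolding a_def by (simp add: T3_def' mult_ac)
      also have "\<dots> = (\<integral>s. V \<bullet> (a s *\<^sub>R U s) \<partial>lborel)"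
        unfolding V_def
      proof (rule Bochner_Integration.integral_cong[OF refl])
        fix s :: real
        show "(\<integral>r. (a r *\<^sub>R U r) \<bullet> (a s *\<^sub>R U s) \<partial>lborel) = (\<integral>r. a r *\<^sub>R U r \<partial>lborel) \<bullet> (a s *\<^sub>R U s)"
          by (rule integral_inner_left) (rule VI)
      qed
      also have "\<dots> = V \<bullet> V"
        unfolding V_def by (rule integral_inner_right) (rule VI)
      also have "\<dots> \<ge> 0" by simp
      finally show "0 \<le> (\<integral>p. T3 b U (x, p) \<partial>(lborel \<Otimes>\<^sub>M lborel))" .
    qed
  qed
  finally show ?thesis .
qed

lemma Fs_nonneg: "integral\<^sup>L (lborel \<Otimes>\<^sub>M lborel) (\<lambda>p. Wk b (fst p - snd p) * (U (snd p) \<bullet> U (fst p))) \<ge> 0"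
proof -
  have pos: "Gamma b * enn2real (JJ (b/2)) > 0"
    using Gb[OF b t Um Ui Uz] JJb[OF b t Um Ui Uz] by (simp add: enn2real_positive_iff)
  have "0 \<le> Gamma b * enn2real (JJ (b/2)) * integral\<^sup>L (lborel \<Otimes>\<^sub>M lborel) (\<lambda>p. Wk b (fst p - snd p) * (U (snd p) \<bullet> U (fst p)))"
    using D4 D3 by simp
  then show ?thesis using pos by (simp add: zero_le_mult_iff)
qed

lemma F_nonneg: "integral\<^sup>L (lborel \<Otimes>\<^sub>M lborel) (\<lambda>p. G0 b (fst p) (snd p) * (U (snd p) \<bullet> U (fst p))) \<ge> 0"
  using Fs_nonneg sym_step[OF b t Um Ui Uz] by simp

end


lemma omega_zero: "omega b 0 = 0" by (simp add: omega_def)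

lemma Q_repr:
  fixes u :: "real \<Rightarrow> 'a::{real_inner, banach, second_countable_topology}"
  assumes "b \<noteq> 0"
  shows "Iint (\<lambda>s. frac_int b u s \<bullet> u s) t
    = (\<integral>s. (\<integral>r. G0 b s r *\<^sub>R (indicator {0..t} r *\<^sub>R u r) \<partial>lborel) \<bullet> (indicator {0..t} s *\<^sub>R u s) \<partial>lborel)"
  unfolding Iint_def set_lebesgue_integral_def
proof (rule Bochner_Integration.integral_cong[OF refl])
  fix s :: real
  show "indicator {0..t} s *\<^sub>R (frac_int b u s \<bullet> u s)
    = (\<integral>r. G0 b s r *\<^sub>R (indicator {0..t} r *\<^sub>R u r) \<partial>lborel) \<bullet> (indicator {0..t} s *\<^sub>R u s)"
  proof (cases "s \<in> {0..t}")
    case False then show ?thesis by simp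
  next
    case True
    have "frac_int b u s = (\<integral>r. indicator {0..s} r *\<^sub>R (omega b (s - r) *\<^sub>R u r) \<partial>lborel)"
      using assms by (simp add: frac_int_def set_lebesgue_integral_def)
    also have "\<dots> = (\<integral>r. G0 b s r *\<^sub>R (indicator {0..t} r *\<^sub>R u r) \<partial>lborel)"
    proof (rule Bochner_Integration.integral_cong[OF refl])
      fix r :: real
      show "indicator {0..s} r *\<^sub>R (omega b (s - r) *\<^sub>R u r) = G0 b s r *\<^sub>R (indicator {0..t} r *\<^sub>R u r)"
        using True by (cases "r < s"; cases "0 \<le> r"; cases "r = s") (auto simp: G0_def indicator_def omega_zero)
    qed
    finally show ?thesis using True by simp
  qed
qed

lemma Q0_repr:
  fixes u :: "real \<Rightarrow> 'a::{real_inner, banach, second_countable_topology}"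
  shows "Iint (\<lambda>s. frac_int 0 u s \<bullet> u s) t = (\<integral>s. norm (indicator {0..t} s *\<^sub>R u s)^2 \<partial>lborel)"
  unfolding Iint_def set_lebesgue_integral_def frac_int_def
  by (rule Bochner_Integration.integral_cong[OF refl]) (auto simp: indicator_def power2_norm_eq_inner)

lemma prep:
  fixes v :: "real \<Rightarrow> 'a::{real_inner, banach, second_countable_topology}"
  assumes "0 \<le> t" "t \<le> T"
    and vm: "set_borel_measurable lborel {0..T} v"
    and vi: "set_integrable lborel {0..T} (\<lambda>s. (norm (v s))\<^sup>2)"
  shows "(\<lambda>r. indicator {0..t} r *\<^sub>R v r) \<in> borel_measurable lborel"
    and "integrable lborel (\<lambda>r. norm (indicator {0..t} r *\<^sub>R v r)^2)"
proof -
  have V[measurable]: "(\<lambda>x. indicator {0..T} x *\<^sub>R v x) \<in> borel_measurable lborel"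
    using vm by (simp add: set_borel_measurable_def)
  have eq: "(\<lambda>r. indicator {0..t} r *\<^sub>R v r) = (\<lambda>r. indicator {0..t} r *\<^sub>R (indicator {0..T} r *\<^sub>R v r))"
    using assms(2) by (auto simp: indicator_def fun_eq_iff)
  show m: "(\<lambda>r. indicator {0..t} r *\<^sub>R v r) \<in> borel_measurable lborel"
    unfolding eq by measurable
  have I: "integrable lborel (\<lambda>x. indicator {0..T} x *\<^sub>R (norm (v x))\<^sup>2)"
    using vi by (simp add: set_integrable_def)
  show "integrable lborel (\<lambda>r. norm (indicator {0..t} r *\<^sub>R v r)^2)"
  proof (rule Bochner_Integration.integrable_bound[OF I])
    show "(\<lambda>r. norm (indicator {0..t} r *\<^sub>R v r)^2) \<in> borel_measurable lborel"
      using m by measurable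
    show "AE x in lborel. norm (norm (indicator {0..t} x *\<^sub>R v x)^2) \<le> norm (indicator {0..T} x *\<^sub>R (norm (v x))\<^sup>2)"
      using assms(2) by (intro AE_I2) (auto simp: indicator_def)
  qed
qed

lemma sq_sum_bound:
  fixes x y :: "'a::real_inner"
  shows "norm (x + y)^2 \<le> 2 * norm x ^2 + 2 * norm y ^2"
proof -
  have "norm (x + y)^2 + norm (x - y)^2 = 2 * norm x ^2 + 2 * norm y ^2"
    by (simp add: power2_norm_eq_inner inner_add_left inner_add_right inner_diff_left inner_diff_right inner_commute)
  then show ?thesis by (smt (verit) zero_le_power2)
qed

lemma int_sum_sq:
  fixes A B :: "real \<Rightarrow> 'a::{real_inner, banach, second_countable_topology}"
  assumes [measurable]: "A \<in> borel_measurable lborel" "B \<in> borel_measurable lborel"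
    and IA: "integrable lborel (\<lambda>r. norm (A r)^2)" and IB: "integrable lborel (\<lambda>r. norm (B r)^2)"
  shows "integrable lborel (\<lambda>r. norm (A r + B r)^2)" "integrable lborel (\<lambda>r. norm (A r - B r)^2)"
proof -
  have I: "integrable lborel (\<lambda>r. 2 * norm (A r)^2 + 2 * norm (B r)^2)"
    using IA IB by auto
  show "integrable lborel (\<lambda>r. norm (A r + B r)^2)"
    by (rule Bochner_Integration.integrable_bound[OF I]) (auto intro!: AE_I2 simp del: power2_norm_eq_inner
        intro: order_trans[OF sq_sum_bound] abs_ge_self)
  show "integrable lborel (\<lambda>r. norm (A r - B r)^2)"
    by (rule Bochner_Integration.integrable_bound[OF I])
       (auto intro!: AE_I2 intro: order_trans[OF sq_sum_bound[of "A _" "- B _", simplified]] abs_ge_self)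
qed



lemma aux_le: "(a::real) + c = d \<Longrightarrow> 0 \<le> c \<Longrightarrow> a \<le> d" by linarith

theorem lemma2p2:
  fixes v w :: "real \<Rightarrow> 'a::{real_inner, banach, second_countable_topology}"
    and \<alpha> T t :: real
  assumes "0 < \<alpha>" and "\<alpha> \<le> 1"
    and "set_borel_measurable lborel {0..T} v"
    and "set_borel_measurable lborel {0..T} w"
    and "set_integrable lborel {0..T} (\<lambda>s. (norm (v s))\<^sup>2)"
    and "set_integrable lborel {0..T} (\<lambda>s. (norm (w s))\<^sup>2)"
    and "0 \<le> t" and "t \<le> T"
  shows "Iint (\<lambda>s. frac_int (1 - \<alpha>) (\<lambda>r. v r + w r) s \<bullet> (v s + w s)) t
         \<le> (1 + 1 / \<alpha>) * (Iint (\<lambda>s. frac_int (1 - \<alpha>) v s \<bullet> v s) t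
                           + Iint (\<lambda>s. frac_int (1 - \<alpha>) w s \<bullet> w s) t)"
proof -
  define Uv where "Uv = (\<lambda>r. indicator {0..t} r *\<^sub>R v r)"
  define Uw where "Uw = (\<lambda>r. indicator {0..t} r *\<^sub>R w r)"
  have Uvm[measurable]: "Uv \<in> borel_measurable lborel" and Uvi: "integrable lborel (\<lambda>r. norm (Uv r)^2)"
    using prep[OF assms(7,8,3,5)] unfolding Uv_def by auto
  have Uwm[measurable]: "Uw \<in> borel_measurable lborel" and Uwi: "integrable lborel (\<lambda>r. norm (Uw r)^2)"
    using prep[OF assms(7,8,4,6)] unfolding Uw_def by auto
  have Upi: "integrable lborel (\<lambda>r. norm (Uv r + Uw r)^2)" and Umi: "integrable lborel (\<lambda>r. norm (Uv r - Uw r)^2)"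
    using int_sum_sq[OF Uvm Uwm Uvi Uwi] by auto
  have Upeq: "(\<lambda>r. indicator {0..t} r *\<^sub>R (v r + w r)) = (\<lambda>r. Uv r + Uw r)"
    unfolding Uv_def Uw_def by (simp add: scaleR_add_right)
  have Uvz: "\<And>r. r \<notin> {0..t} \<Longrightarrow> Uv r = 0" unfolding Uv_def by simp
  have Uwz: "\<And>r. r \<notin> {0..t} \<Longrightarrow> Uw r = 0" unfolding Uw_def by simp
  have Upz: "\<And>r. r \<notin> {0..t} \<Longrightarrow> Uv r + Uw r = 0" using Uvz Uwz by simp
  have Umz: "\<And>r. r \<notin> {0..t} \<Longrightarrow> Uv r - Uw r = 0" using Uvz Uwz by simp
  have Upm: "(\<lambda>r. Uv r + Uw r) \<in> borel_measurable lborel" by measurable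
  have Umm: "(\<lambda>r. Uv r - Uw r) \<in> borel_measurable lborel" by measurable
  show ?thesis
  proof (cases "\<alpha> = 1")
    case True
    have L: "Iint (\<lambda>s. frac_int (1 - \<alpha>) (\<lambda>r. v r + w r) s \<bullet> (v s + w s)) t = (\<integral>s. norm (Uv s + Uw s)^2 \<partial>lborel)"
    proof -
      have e: "\<And>s. norm (indicator {0..t} s *\<^sub>R (v s + w s)) = norm (Uv s + Uw s)"
        using fun_cong[OF Upeq] by simp
      have z: "1 - \<alpha> = 0" using True by simp
      show ?thesis unfolding z using Q0_repr[of "\<lambda>r. v r + w r" t] unfolding e by simp
    qed
    have Lv: "Iint (\<lambda>s. frac_int (1 - \<alpha>) v s \<bullet> v s) t = (\<integral>s. norm (Uv s)^2 \<partial>lborel)"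
      using Q0_repr[of v t] True unfolding Uv_def by simp
    have Lw: "Iint (\<lambda>s. frac_int (1 - \<alpha>) w s \<bullet> w s) t = (\<integral>s. norm (Uw s)^2 \<partial>lborel)"
      using Q0_repr[of w t] True unfolding Uw_def by simp
    have "(\<integral>s. norm (Uv s + Uw s)^2 \<partial>lborel) \<le> (\<integral>s. 2 * norm (Uv s)^2 + 2 * norm (Uw s)^2 \<partial>lborel)"
      using Upi Uvi Uwi by (intro integral_mono) (auto intro: sq_sum_bound)
    also have "\<dots> = 2 * ((\<integral>s. norm (Uv s)^2 \<partial>lborel) + (\<integral>s. norm (Uw s)^2 \<partial>lborel))"
      using Uvi Uwi by simp
    finally show ?thesis unfolding L Lv Lw using True by simp
  next
    case False
    define b where "b = 1 - \<alpha>"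
    have b: "0 < b" "b < 1" using assms(1,2) False by (auto simp: b_def)
    define Q where "Q = (\<lambda>U::real \<Rightarrow> 'a. integral\<^sup>L (lborel \<Otimes>\<^sub>M lborel) (\<lambda>p. G0 b (fst p) (snd p) * (U (snd p) \<bullet> U (fst p))))"
    have L: "Iint (\<lambda>s. frac_int (1 - \<alpha>) (\<lambda>r. v r + w r) s \<bullet> (v s + w s)) t = Q (\<lambda>r. Uv r + Uw r)"
    proof -
      have "Iint (\<lambda>s. frac_int b (\<lambda>r. v r + w r) s \<bullet> (v s + w s)) t
        = (\<integral>s. (\<integral>r. G0 b s r *\<^sub>R (Uv r + Uw r) \<partial>lborel) \<bullet> (Uv s + Uw s) \<partial>lborel)"
      proof -
        have e: "\<And>r. indicator {0..t} r *\<^sub>R (v r + w r) = Uv r + Uw r"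
          using fun_cong[OF Upeq] by simp
        have bn: "b \<noteq> 0" using b by simp
        show ?thesis using Q_repr[OF bn, of "\<lambda>r. v r + w r" t] unfolding e .
      qed
      also have "\<dots> = Q (\<lambda>r. Uv r + Uw r)"
        unfolding Q_def by (rule repr_inner[OF b assms(7) Upm Upi Upz])
      finally show ?thesis by (simp add: b_def)
    qed
    have Lv: "Iint (\<lambda>s. frac_int (1 - \<alpha>) v s \<bullet> v s) t = Q Uv"
    proof -
      have "Iint (\<lambda>s. frac_int b v s \<bullet> v s) t = (\<integral>s. (\<integral>r. G0 b s r *\<^sub>R Uv r \<partial>lborel) \<bullet> Uv s \<partial>lborel)"
        using Q_repr[of b v t] b unfolding Uv_def by simp
      also have "\<dots> = Q Uv"
        unfolding Q_def by (rule repr_inner[OF b assms(7) Uvm Uvi Uvz])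
      finally show ?thesis by (simp add: b_def)
    qed
    have Lw: "Iint (\<lambda>s. frac_int (1 - \<alpha>) w s \<bullet> w s) t = Q Uw"
    proof -
      have "Iint (\<lambda>s. frac_int b w s \<bullet> w s) t = (\<integral>s. (\<integral>r. G0 b s r *\<^sub>R Uw r \<partial>lborel) \<bullet> Uw s \<partial>lborel)"
        using Q_repr[of b w t] b unfolding Uw_def by simp
      also have "\<dots> = Q Uw"
        unfolding Q_def by (rule repr_inner[OF b assms(7) Uwm Uwi Uwz])
      finally show ?thesis by (simp add: b_def)
    qed
    have Ip: "integrable (lborel \<Otimes>\<^sub>M lborel) (\<lambda>p. G0 b (fst p) (snd p) * ((Uv (snd p) + Uw (snd p)) \<bullet> (Uv (fst p) + Uw (fst p))))"
      by (rule F_int[OF b assms(7) Upm Upi Upz])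
    have Im: "integrable (lborel \<Otimes>\<^sub>M lborel) (\<lambda>p. G0 b (fst p) (snd p) * ((Uv (snd p) - Uw (snd p)) \<bullet> (Uv (fst p) - Uw (fst p))))"
      by (rule F_int[OF b assms(7) Umm Umi Umz])
    have Iv: "integrable (lborel \<Otimes>\<^sub>M lborel) (\<lambda>p. G0 b (fst p) (snd p) * (Uv (snd p) \<bullet> Uv (fst p)))"
      by (rule F_int[OF b assms(7) Uvm Uvi Uvz])
    have Iw: "integrable (lborel \<Otimes>\<^sub>M lborel) (\<lambda>p. G0 b (fst p) (snd p) * (Uw (snd p) \<bullet> Uw (fst p)))"
      by (rule F_int[OF b assms(7) Uwm Uwi Uwz])
    have Qm: "Q (\<lambda>r. Uv r - Uw r) \<ge> 0"
      unfolding Q_def by (rule F_nonneg[OF b assms(7) Umm Umi Umz])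
    have Qv: "Q Uv \<ge> 0"
      unfolding Q_def by (rule F_nonneg[OF b assms(7) Uvm Uvi Uvz])
    have Qw: "Q Uw \<ge> 0"
      unfolding Q_def by (rule F_nonneg[OF b assms(7) Uwm Uwi Uwz])
    have par: "Q (\<lambda>r. Uv r + Uw r) + Q (\<lambda>r. Uv r - Uw r) = 2 * Q Uv + 2 * Q Uw"
    proof -
      have "Q (\<lambda>r. Uv r + Uw r) + Q (\<lambda>r. Uv r - Uw r)
        = integral\<^sup>L (lborel \<Otimes>\<^sub>M lborel) (\<lambda>p. G0 b (fst p) (snd p) * ((Uv (snd p) + Uw (snd p)) \<bullet> (Uv (fst p) + Uw (fst p)))
             + G0 b (fst p) (snd p) * ((Uv (snd p) - Uw (snd p)) \<bullet> (Uv (fst p) - Uw (fst p))))"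
        unfolding Q_def by (rule Bochner_Integration.integral_add[OF Ip Im, symmetric])
      also have "\<dots> = integral\<^sup>L (lborel \<Otimes>\<^sub>M lborel) (\<lambda>p. 2 * (G0 b (fst p) (snd p) * (Uv (snd p) \<bullet> Uv (fst p)))
             + 2 * (G0 b (fst p) (snd p) * (Uw (snd p) \<bullet> Uw (fst p))))"
        by (rule Bochner_Integration.integral_cong[OF refl])
           (simp add: inner_add_left inner_add_right inner_diff_left inner_diff_right algebra_simps)
      also have "\<dots> = 2 * Q Uv + 2 * Q Uw"
        unfolding Q_def using Iv Iw by simp
      finally show ?thesis .
    qed
    have "Q (\<lambda>r. Uv r + Uw r) \<le> 2 * (Q Uv + Q Uw)" using aux_le[OF par Qm] by (simp add: distrib_left)
    also have "\<dots> \<le> (1 + 1 / \<alpha>) * (Q Uv + Q Uw)"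
    proof (rule mult_right_mono)
      have "1 \<le> 1 / \<alpha>" using assms(1,2) by simp
      then show "2 \<le> 1 + 1 / \<alpha>" by simp
      show "0 \<le> Q Uv + Q Uw" using Qv Qw by simp
    qed
    finally show ?thesis unfolding L Lv Lw .
  qed
qed


end
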